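(* Let $K$ be a field containing $\mathbb{Q}$ such that every element of $K$ is algebraic over $\mathbb{Q}$. Then $\widetilde{K}=\{x\in K: \sigma(x)=x \text{ for every field automorphism } \sigma \text{ of } K\}$.
   Context: Let $K$ be a field. For $r\in K$, a finite set $A(r)$ with $\{r\}\subseteq A(r)\subseteq K$ is called adequate for $r$ if every mapping $f:A(r)\to K$ satisfying (1) if $1\in A(r)$ then $f(1)=1$; (2) if $a,b\in A(r)$ and $a+b\in A(r)$ then $f(a+b)=f(a)+f(b)$; (3) if $a,b\in A(r)$ and $a\cdot b\in A(r)$ then $f(a\cdot b)=f(a)\cdot f(b)$, also satisfies $f(r)=r$. $\widetilde{K}$ denotes the set of all $r\in K$ for which some finite set adequate for $r$ exists. *)

theory Defs
  imports "HOL-Computational_Algebra.Polynomial"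
begin

definition adequate :: "'a::field set \<Rightarrow> 'a \<Rightarrow> bool" where
  "adequate A r \<longleftrightarrow> finite A \<and> r \<in> A \<and>
     (\<forall>f :: 'a \<Rightarrow> 'a.
        (1 \<in> A \<longrightarrow> f 1 = 1) \<and>
        (\<forall>a\<in>A. \<forall>b\<in>A. a + b \<in> A \<longrightarrow> f (a + b) = f a + f b) \<and>
        (\<forall>a\<in>A. \<forall>b\<in>A. a * b \<in> A \<longrightarrow> f (a * b) = f a * f b)
        \<longrightarrow> f r = r)"

definition Ktilde :: "'a::field set" where
  "Ktilde = {r. \<exists>A. adequate A r}"

definition field_automorphism :: "('a::field \<Rightarrow> 'a) \<Rightarrow> bool" where
  "field_automorphism \<sigma> \<longleftrightarrow> bij \<sigma> \<and> \<sigma> 1 = 1 \<and>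
     (\<forall>x y. \<sigma> (x + y) = \<sigma> x + \<sigma> y) \<and> (\<forall>x y. \<sigma> (x * y) = \<sigma> x * \<sigma> y)"

end

theory Submission
  imports Defs "HOL-Analysis.Analysis"
begin

definition phom :: "'a::field set \<Rightarrow> ('a \<Rightarrow> 'a) \<Rightarrow> bool" where
  "phom A f \<longleftrightarrow> (1 \<in> A \<longrightarrow> f 1 = 1) \<and>
        (\<forall>a\<in>A. \<forall>b\<in>A. a + b \<in> A \<longrightarrow> f (a + b) = f a + f b) \<and>
        (\<forall>a\<in>A. \<forall>b\<in>A. a * b \<in> A \<longrightarrow> f (a * b) = f a * f b)"

lemma phom_mono: "phom B f \<Longrightarrow> A \<subseteq> B \<Longrightarrow> phom A f"
  unfolding phom_def by blast

lemma phom_cong: "phom A f \<Longrightarrow> (\<And>a. a \<in> A \<Longrightarrow> g a = f a) \<Longrightarrow> phom A g"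
  unfolding phom_def by auto

lemma phom_add: "phom A f \<Longrightarrow> a \<in> A \<Longrightarrow> b \<in> A \<Longrightarrow> a + b \<in> A \<Longrightarrow> f (a + b) = f a + f b"
  unfolding phom_def by blast

lemma phom_mul: "phom A f \<Longrightarrow> a \<in> A \<Longrightarrow> b \<in> A \<Longrightarrow> a * b \<in> A \<Longrightarrow> f (a * b) = f a * f b"
  unfolding phom_def by blast

lemma phom_one: "phom A f \<Longrightarrow> 1 \<in> A \<Longrightarrow> f 1 = 1"
  unfolding phom_def by blast

lemma adequate_iff: "adequate A r \<longleftrightarrow> finite A \<and> r \<in> A \<and> (\<forall>f. phom A f \<longrightarrow> f r = r)"
  unfolding adequate_def phom_def by blast

lemma phom_zero: "0 \<in> A \<Longrightarrow> phom A f \<Longrightarrow> f 0 = 0"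
  unfolding phom_def by (metis add.right_neutral add_left_cancel)

lemma nat_fix:
  "\<exists>A. finite A \<and> (of_nat n :: 'a::field) \<in> A \<and> 0 \<in> A \<and>
     (\<forall>f. phom A f \<longrightarrow> (\<forall>m\<le>n. f (of_nat m) = of_nat m))"
proof -
  define A :: "'a set" where "A = insert 1 (of_nat ` {0..n})"
  have 1: "finite A" unfolding A_def by simp
  have 2: "of_nat n \<in> A" unfolding A_def by simp
  have 3: "0 \<in> A" unfolding A_def by (metis atLeastAtMost_iff image_eqI insertCI le0 of_nat_0)
  have 4: "\<forall>m\<le>n. f (of_nat m) = of_nat m" if f: "phom A f" for f
  proof (intro allI impI)
    fix m assume "m \<le> n"
    then show "f (of_nat m) = of_nat m"
    proof (induction m)
      case 0
      then show ?case using phom_zero[OF 3 f] by simp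
    next
      case (Suc m)
      have m1: "(of_nat m :: 'a) \<in> A" "(1::'a) \<in> A" "(of_nat m :: 'a) + 1 \<in> A"
      proof -
        have "(of_nat m :: 'a) \<in> of_nat ` {0..n}" using Suc.prems by (intro imageI) simp
        moreover have "(of_nat (Suc m) :: 'a) \<in> of_nat ` {0..n}" using Suc.prems by (intro imageI) simp
        ultimately show "(of_nat m :: 'a) \<in> A" "(1::'a) \<in> A" "(of_nat m :: 'a) + 1 \<in> A"
          unfolding A_def by (simp_all only: of_nat_Suc add.commute insertI1 insertI2)
      qed
      have "f ((of_nat m :: 'a) + 1) = f (of_nat m) + f 1"
        using f m1 unfolding phom_def by blast
      moreover have "f 1 = 1" using f m1(2) unfolding phom_def by simp
      ultimately show ?case using Suc by (simp add: add.commute)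
    qed
  qed
  show ?thesis using 1 2 3 4 by blast
qed

lemma int_fix:
  "\<exists>A. finite A \<and> (of_int c :: 'a::field) \<in> A \<and> (\<forall>f. phom A f \<longrightarrow> f (of_int c) = of_int c)"
proof -
  obtain A :: "'a set" where A: "finite A" "of_nat (nat \<bar>c\<bar>) \<in> A" "0 \<in> A"
    "\<And>f m. phom A f \<Longrightarrow> m \<le> nat \<bar>c\<bar> \<Longrightarrow> f (of_nat m) = of_nat m"
    using nat_fix[of "nat \<bar>c\<bar>"] by blast
  show ?thesis
  proof (intro exI conjI allI impI)
    show "finite (insert (of_int c) A)" using A by simp
    show "of_int c \<in> insert (of_int c) A" by simp
    fix f assume f: "phom (insert (of_int c) A) f"
    hence fA: "phom A f" by (rule phom_mono) auto
    show "f (of_int c) = of_int c"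
    proof (cases "c \<ge> 0")
      case True
      then have "(of_int c :: 'a) = of_nat (nat \<bar>c\<bar>)" by simp
      then show ?thesis using A(4)[OF fA, of "nat \<bar>c\<bar>"] by simp
    next
      case False
      then have e: "(of_int c :: 'a) + of_nat (nat \<bar>c\<bar>) = 0" by simp
      have "f (of_int c + of_nat (nat \<bar>c\<bar>)) = f (of_int c) + f (of_nat (nat \<bar>c\<bar>))"
        using f A e unfolding phom_def by (metis insertCI)
      then have "f (of_int c) + of_nat (nat \<bar>c\<bar>) = 0"
        using e A(4)[OF fA, of "nat \<bar>c\<bar>"] phom_zero[OF A(3) fA] by simp
      then show ?thesis using e by (metis add_right_cancel)
    qed
  qed
qed

lemma horner:
  "\<exists>A. finite A \<and> (k::'a::field_char_0) \<in> A \<and> poly (map_poly of_int q) k \<in> A \<and>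
     (\<forall>f. phom A f \<longrightarrow> f (poly (map_poly of_int q) k) = poly (map_poly of_int q) (f k))"
proof (induction q rule: pCons_induct)
  case 0
  show ?case
    by (rule exI[of _ "{0, k}"]) (auto intro: phom_zero)
next
  case (pCons a p)
  obtain A where A: "finite A" "k \<in> A" "poly (map_poly of_int p) k \<in> A"
    "\<And>f. phom A f \<Longrightarrow> f (poly (map_poly of_int p) k) = poly (map_poly of_int p) (f k)"
    using pCons.IH by blast
  obtain B :: "'a set" where B: "finite B" "of_int a \<in> B" "\<And>f. phom B f \<Longrightarrow> f (of_int a) = of_int a"
    using int_fix by blast
  let ?y = "poly (map_poly of_int p) k"
  have e: "poly (map_poly of_int (pCons a p)) k = of_int a + k * ?y"
    by (simp add: map_poly_pCons)
  have e2: "\<And>z. poly (map_poly of_int (pCons a p)) z = of_int a + z * poly (map_poly of_int p) z"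
    by (simp add: map_poly_pCons)
  let ?C = "A \<union> B \<union> {k * ?y, of_int a + k * ?y}"
  show ?case
  proof (intro exI conjI allI impI)
    show "finite ?C" using A B by simp
    show "k \<in> ?C" using A by simp
    show "poly (map_poly of_int (pCons a p)) k \<in> ?C" using e by simp
    fix f assume f: "phom ?C f"
    have fA: "phom A f" by (rule phom_mono[OF f]) auto
    have fB: "phom B f" by (rule phom_mono[OF f]) auto
    have "f (of_int a + k * ?y) = f (of_int a) + f (k * ?y)"
      using f B A unfolding phom_def by blast
    moreover have "f (k * ?y) = f k * f ?y"
      using f B A unfolding phom_def by blast
    ultimately show "f (poly (map_poly of_int (pCons a p)) k) = poly (map_poly of_int (pCons a p)) (f k)"
      unfolding e e2 using A(4)[OF fA] B(3)[OF fB] by simp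
  qed
qed

theorem theorem3:
  assumes "\<forall>x :: 'a :: field_char_0. algebraic x"
  shows "(Ktilde :: 'a set) = {x. \<forall>\<sigma>. field_automorphism \<sigma> \<longrightarrow> \<sigma> x = x}"
proof
  show "(Ktilde :: 'a set) \<subseteq> {x. \<forall>\<sigma>. field_automorphism \<sigma> \<longrightarrow> \<sigma> x = x}"
  proof
    fix r :: 'a assume "r \<in> Ktilde"
    then obtain A where A: "adequate A r" unfolding Ktilde_def by blast
    show "r \<in> {x. \<forall>\<sigma>. field_automorphism \<sigma> \<longrightarrow> \<sigma> x = x}"
    proof (intro CollectI allI impI)
      fix \<sigma> :: "'a \<Rightarrow> 'a" assume "field_automorphism \<sigma>"
      then have "phom A \<sigma>" unfolding field_automorphism_def phom_def by auto
      then show "\<sigma> r = r" using A unfolding adequate_iff by blast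
    qed
  qed
next
  show "{x. \<forall>\<sigma>. field_automorphism \<sigma> \<longrightarrow> \<sigma> x = x} \<subseteq> (Ktilde :: 'a set)"
  proof
    fix x :: 'a
    assume "x \<in> {x. \<forall>\<sigma>. field_automorphism \<sigma> \<longrightarrow> \<sigma> x = x}"
    then have fixed: "\<And>\<sigma>. field_automorphism \<sigma> \<Longrightarrow> \<sigma> x = x" by blast
    show "x \<in> Ktilde"
    proof (rule ccontr)
      assume "x \<notin> Ktilde"
      then have nA: "\<And>A. finite A \<Longrightarrow> x \<in> A \<Longrightarrow> \<exists>f. phom A f \<and> f x \<noteq> x"
        unfolding Ktilde_def adequate_iff by blast
      define P where "P k = (SOME q::int poly. q \<noteq> 0 \<and> poly (map_poly of_int q) k = 0)" for k :: 'a
      have P: "P k \<noteq> 0 \<and> poly (map_poly of_int (P k)) k = 0" for k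
      proof -
        obtain q :: "int poly" where "q \<noteq> 0" "poly (map_poly of_int q) k = 0"
          using assms algebraicE' by blast
        then have "\<exists>q::int poly. q \<noteq> 0 \<and> poly (map_poly of_int q) k = 0" by blast
        then show ?thesis unfolding P_def by (rule someI_ex)
      qed
      define R where "R k = {z::'a. poly (map_poly of_int (P k)) z = 0}" for k :: 'a
      have Rfin: "finite (R k)" for k
        unfolding R_def by (rule poly_roots_finite) (use P[of k] in \<open>simp add: map_poly_eq_0_iff\<close>)
      have kR: "k \<in> R k" for k unfolding R_def using P by simp
      define T where "T = product_topology (\<lambda>k. discrete_topology (R k)) (UNIV::'a set)"
      have topT: "topspace T = {g. \<forall>k. g k \<in> R k}"
        unfolding T_def by (auto simp: PiE_def)
      have compT: "compact_space T"
        unfolding T_def using Rfin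
        by (simp add: compact_space_product_topology compact_space_discrete_topology)
      have openB: "openin T {h \<in> topspace T. \<forall>j\<in>J. h j = g j}" if "finite J" "g \<in> topspace T" for J g
        using that(1)
      proof (induction J rule: finite_induct)
        case empty
        then show ?case by simp
      next
        case (insert a J)
        have "openin T {h \<in> topspace T. (\<lambda>h. h a) h \<in> {g a}}"
        proof (rule openin_continuous_map_preimage)
          show "continuous_map T (discrete_topology (R a)) (\<lambda>h. h a)"
            unfolding T_def by (rule continuous_map_product_projection) simp
          show "openin (discrete_topology (R a)) {g a}" using that(2) topT by simp
        qed
        then have "openin T ({h \<in> topspace T. h a = g a} \<inter> {h \<in> topspace T. \<forall>j\<in>J. h j = g j})"
          using insert.IH by (intro openin_Int) auto
        moreover have "{h \<in> topspace T. h a = g a} \<inter> {h \<in> topspace T. \<forall>j\<in>J. h j = g j}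
             = {h \<in> topspace T. \<forall>j\<in>insert a J. h j = g j}" by auto
        ultimately show ?case by simp
      qed
      have openQ: "openin T {g \<in> topspace T. Q g}"
        if "finite J" "\<And>g h. (\<forall>j\<in>J. g j = h j) \<Longrightarrow> Q g = Q h" for J Q
      proof (subst openin_subopen, intro ballI)
        fix g assume g: "g \<in> {g \<in> topspace T. Q g}"
        show "\<exists>S. openin T S \<and> g \<in> S \<and> S \<subseteq> {g \<in> topspace T. Q g}"
        proof (intro exI conjI)
          show "openin T {h \<in> topspace T. \<forall>j\<in>J. h j = g j}"
            using openB[OF that(1)] g by blast
          show "g \<in> {h \<in> topspace T. \<forall>j\<in>J. h j = g j}" using g by blast
          show "{h \<in> topspace T. \<forall>j\<in>J. h j = g j} \<subseteq> {g \<in> topspace T. Q g}"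
          proof
            fix h assume h: "h \<in> {h \<in> topspace T. \<forall>j\<in>J. h j = g j}"
            then have "Q h = Q g" using that(2)[of h g] by blast
            then show "h \<in> {g \<in> topspace T. Q g}" using h g by blast
          qed
        qed
      qed
      have closedQ: "closedin T {g \<in> topspace T. Q g}"
        if "finite J" "\<And>g h. (\<forall>j\<in>J. g j = h j) \<Longrightarrow> Q g = Q h" for J Q
      proof -
        have "openin T {g \<in> topspace T. \<not> Q g}"
          using that by (intro openQ[of J]) auto
        moreover have "topspace T - {g \<in> topspace T. Q g} = {g \<in> topspace T. \<not> Q g}" by auto
        ultimately show ?thesis unfolding closedin_def by auto
      qed
      define C where "C S = {g \<in> topspace T. phom S g \<and> g x \<noteq> x}" for S
      define U where "U = C ` {S. finite S}"
      have Uclosed: "\<forall>c\<in>U. closedin T c"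
      proof
        fix c assume "c \<in> U"
        then obtain S where S: "finite S" "c = C S" unfolding U_def by blast
        show "closedin T c" unfolding S(2) C_def
        proof (rule closedQ[of "insert x S"])
          show "finite (insert x S)" using S by simp
          fix g h :: "'a \<Rightarrow> 'a" assume "\<forall>j\<in>insert x S. g j = h j"
          then show "(phom S g \<and> g x \<noteq> x) = (phom S h \<and> h x \<noteq> x)"
            using phom_cong[of S g h] phom_cong[of S h g] by auto
        qed
      qed
      have Ufip: "\<forall>F. finite F \<and> F \<subseteq> U \<longrightarrow> \<Inter>F \<noteq> {}"
      proof (intro allI impI)
        fix F assume F: "finite F \<and> F \<subseteq> U"
        then obtain SS where SS: "SS \<subseteq> {S. finite S}" "finite SS" "F = C ` SS"
          unfolding U_def by (meson finite_subset_image)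
        define A0 where "A0 = insert x (\<Union>SS)"
        have A0fin: "finite A0" using SS unfolding A0_def by auto
        have "\<forall>k. \<exists>H. finite H \<and> k \<in> H \<and> poly (map_poly of_int (P k)) k \<in> H \<and>
           (\<forall>f. phom H f \<longrightarrow> f (poly (map_poly of_int (P k)) k) = poly (map_poly of_int (P k)) (f k))"
          using horner by blast
        then have "\<exists>H. \<forall>k. finite (H k) \<and> k \<in> H k \<and> poly (map_poly of_int (P k)) k \<in> H k \<and>
           (\<forall>f. phom (H k) f \<longrightarrow> f (poly (map_poly of_int (P k)) k) = poly (map_poly of_int (P k)) (f k))"
          by (rule choice)
        then obtain H where H0: "\<forall>k. finite (H k) \<and> k \<in> H k \<and> poly (map_poly of_int (P k)) k \<in> H k \<and>
           (\<forall>f. phom (H k) f \<longrightarrow> f (poly (map_poly of_int (P k)) k) = poly (map_poly of_int (P k)) (f k))"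
          by (rule exE)
        have H: "\<And>k. finite (H k)" "\<And>k. poly (map_poly of_int (P k)) k \<in> H k"
          "\<And>k f. phom (H k) f \<Longrightarrow> f (poly (map_poly of_int (P k)) k) = poly (map_poly of_int (P k)) (f k)"
          using H0 by blast+
        define A where "A = A0 \<union> \<Union>(H ` A0)"
        have "finite A" unfolding A_def using A0fin H(1) by auto
        moreover have "x \<in> A" unfolding A_def A0_def by simp
        ultimately obtain f where f: "phom A f" "f x \<noteq> x" using nA by blast
        define g where "g k = (if k \<in> A0 then f k else k)" for k
        have "g \<in> topspace T"
        proof -
          have "g k \<in> R k" for k
          proof (cases "k \<in> A0")
            case True
            then have fH: "phom (H k) f" by (intro phom_mono[OF f(1)]) (auto simp: A_def)
            have "f 0 = 0" using phom_zero[OF _ fH] H(2)[of k] P[of k] by simp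
            then have "poly (map_poly of_int (P k)) (f k) = 0"
              using H(3)[OF fH] P[of k] by simp
            then show ?thesis using True unfolding g_def R_def by simp
          next
            case False
            then show ?thesis using kR unfolding g_def by simp
          qed
          then show ?thesis using topT by simp
        qed
        moreover have "g \<in> C S" if "S \<in> SS" for S
        proof -
          have "S \<subseteq> A0" using that unfolding A0_def by auto
          then have "phom S f" by (intro phom_mono[OF f(1)]) (auto simp: A_def)
          then have "phom S g" by (rule phom_cong) (use \<open>S \<subseteq> A0\<close> in \<open>auto simp: g_def\<close>)
          moreover have "g x = f x" unfolding g_def A0_def by simp
          ultimately show ?thesis unfolding C_def using \<open>g \<in> topspace T\<close> f(2) by simp
        qed
        ultimately show "\<Inter>F \<noteq> {}" using SS(3) by blast
      qed
      have "\<Inter>U \<noteq> {}" using compT Uclosed Ufip unfolding compact_space_fip by blast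
      then obtain g where g: "g \<in> \<Inter>U" by blast
      have gC: "g \<in> C S" if "finite S" for S
        using g that unfolding U_def by blast
      have gS: "phom S g" if "finite S" for S
        using gC[OF that] unfolding C_def by simp
      have gx: "g x \<noteq> x" using gC[of "{}"] unfolding C_def by simp
      have gadd: "g (a + b) = g a + g b" for a b
        by (rule phom_add[OF gS[of "{a, b, a + b}"]]) simp_all
      have gmul: "g (a * b) = g a * g b" for a b
        by (rule phom_mul[OF gS[of "{a, b, a * b}"]]) simp_all
      have g1: "g 1 = 1" by (rule phom_one[OF gS[of "{1}"]]) simp_all
      have g0: "g 0 = 0" using gadd[of 0 0] by simp
      have inj: "inj g"
      proof (rule injI, rule ccontr)
        fix a b assume ab: "g a = g b" "a \<noteq> b"
        have "g (a - b) + g b = g a" using gadd[of "a - b" b] by simp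
        then have d0: "g (a - b) = 0" using ab by simp
        have "g 1 = g ((a - b) * inverse (a - b))" using ab by simp
        also have "\<dots> = 0" using gmul d0 by simp
        finally show False using g1 by simp
      qed
      have surj: "surj g"
      proof -
        have "y \<in> range g" for y
        proof -
          have "g ` R y \<subseteq> R y"
          proof
            fix w assume "w \<in> g ` R y"
            then obtain z where z: "z \<in> R y" "w = g z" by blast
            obtain Hz where Hz: "finite Hz" "\<And>f. phom Hz f \<Longrightarrow>
               f (poly (map_poly of_int (P y)) z) = poly (map_poly of_int (P y)) (f z)"
              using horner[of z "P y"] by blast
            have "poly (map_poly of_int (P y)) (g z) = 0"
              using Hz(2)[OF gS[OF Hz(1)]] z g0 unfolding R_def by simp
            then show "w \<in> R y" using z unfolding R_def by simp
          qed
          then have "g ` R y = R y"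
            using endo_inj_surj[OF Rfin] inj by (meson inj_on_subset subset_UNIV)
          then show ?thesis using kR[of y] by blast
        qed
        then show ?thesis by blast
      qed
      have "field_automorphism g"
        unfolding field_automorphism_def using inj surj g1 gadd gmul by (simp add: bij_def)
      then show False using fixed gx by blast
    qed
  qed
qed

end
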